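(* Let $n$ be a positive integer and let $\mathcal M_{n^2}$ be the set of integer matrices of determinant $n^2$ whose entries have greatest common divisor $1$. A complete set of representatives of the $\mathrm{SL}(2,\mathbb Z)$-conjugacy classes of hyperbolic elements of $\mathcal M_{n^2}$ whose fixed points are cusps is $$\left\{\pm\begin{pmatrix}a&b+ma\\0&d\end{pmatrix}:\ b=1,\dots,h,\ \gcd(b,h)=1,\ m=1,\dots,(d-a)/h,\ \text{where }h=\gcd(a,d)\right\},$$ where $a$ and $d$ run over all integers satisfying $ad=n^2$ and $0<a<d$.
   Context: An element is hyperbolic if its fixed points in $\mathbb P^1(\mathbb C)$ are two distinct real numbers; "fixed points are cusps" means both fixed points lie in $\mathbb P^1(\mathbb Q)$. Two such elements are equivalent if they are conjugate by an element of $\mathrm{SL}(2,\mathbb Z)$. *)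

theory Defs
  imports Complex_Main
begin

text \<open>A 2x2 integer matrix (a, b, c, d) stands for the matrix with rows (a b) and (c d).\<close>
type_synonym mat2 = "int \<times> int \<times> int \<times> int"

definition mat2_mult :: "mat2 \<Rightarrow> mat2 \<Rightarrow> mat2" where
  "mat2_mult A B = (case A of (a, b, c, d) \<Rightarrow> case B of (e, f, g, h) \<Rightarrow>
     (a*e + b*g, a*f + b*h, c*e + d*g, c*f + d*h))"

definition mat2_det :: "mat2 \<Rightarrow> int" where
  "mat2_det A = (case A of (a, b, c, d) \<Rightarrow> a*d - b*c)"

definition mat2_scale :: "int \<Rightarrow> mat2 \<Rightarrow> mat2" where
  "mat2_scale s A = (case A of (a, b, c, d) \<Rightarrow> (s*a, s*b, s*c, s*d))"

definition SL2Z :: "mat2 set" where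
  "SL2Z = {A. mat2_det A = 1}"

definition mat2_adj :: "mat2 \<Rightarrow> mat2" where
  "mat2_adj A = (case A of (a, b, c, d) \<Rightarrow> (d, -b, -c, a))"

definition SL2Z_conj :: "mat2 \<Rightarrow> mat2 \<Rightarrow> bool" where
  "SL2Z_conj A B \<longleftrightarrow> (\<exists>g\<in>SL2Z. B = mat2_mult (mat2_mult g A) (mat2_adj g))"

definition primitive_mats :: "int \<Rightarrow> mat2 set" where
  "primitive_mats N = {A. mat2_det A = N \<and>
     (case A of (a, b, c, d) \<Rightarrow> gcd (gcd a b) (gcd c d) = 1)}"

text \<open>Points of P^1(C): Some z is the point [z:1], None is \<infinity> = [1:0].
  The fixed points of the Moebius action of A on P^1(C).\<close>
definition fixed_points :: "mat2 \<Rightarrow> complex option set" where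
  "fixed_points A = (case A of (a, b, c, d) \<Rightarrow>
     {Some z | z. of_int a * z + of_int b = z * (of_int c * z + of_int d)}
     \<union> (if c = 0 then {None} else {}))"

definition in_P1R :: "complex option \<Rightarrow> bool" where
  "in_P1R p = (case p of None \<Rightarrow> True | Some z \<Rightarrow> z \<in> \<real>)"

definition in_P1Q :: "complex option \<Rightarrow> bool" where
  "in_P1Q p = (case p of None \<Rightarrow> True | Some z \<Rightarrow> z \<in> \<rat>)"

definition hyperbolic :: "mat2 \<Rightarrow> bool" where
  "hyperbolic A \<longleftrightarrow> card (fixed_points A) = 2 \<and> (\<forall>p\<in>fixed_points A. in_P1R p)"

definition cusp_fixed :: "mat2 \<Rightarrow> bool" where
  "cusp_fixed A \<longleftrightarrow> (\<forall>p\<in>fixed_points A. in_P1Q p)"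

definition reps :: "nat \<Rightarrow> mat2 set" where
  "reps n = {mat2_scale s (a, b + m*a, 0, d) | s a d b m.
     s \<in> {1, -1} \<and> 0 < a \<and> a < d \<and> a * d = (int n)^2 \<and>
     1 \<le> b \<and> b \<le> gcd a d \<and> coprime b (gcd a d) \<and>
     1 \<le> m \<and> m \<le> (d - a) div gcd a d}"

definition complete_reps :: "mat2 set \<Rightarrow> mat2 set \<Rightarrow> bool" where
  "complete_reps R S \<longleftrightarrow> R \<subseteq> S \<and> (\<forall>A\<in>S. \<exists>B\<in>R. SL2Z_conj A B) \<and>
     (\<forall>B1\<in>R. \<forall>B2\<in>R. SL2Z_conj B1 B2 \<longrightarrow> B1 = B2)"

end

theory Submission
  imports Defs
begin


lemma m_assoc: "mat2_mult (mat2_mult A B) C = mat2_mult A (mat2_mult B C)"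
  by (cases A rule: prod_cases4; cases B rule: prod_cases4; cases C rule: prod_cases4)
     (simp add: mat2_mult_def algebra_simps)

lemma det_mult: "mat2_det (mat2_mult A B) = mat2_det A * mat2_det B"
  by (cases A rule: prod_cases4; cases B rule: prod_cases4)
     (simp add: mat2_mult_def mat2_det_def algebra_simps)

lemma det_adj: "mat2_det (mat2_adj A) = mat2_det A"
  by (cases A rule: prod_cases4) (simp add: mat2_adj_def mat2_det_def algebra_simps)

lemma adj_adj: "mat2_adj (mat2_adj A) = A"
  by (cases A rule: prod_cases4) (simp add: mat2_adj_def)

lemma adj_mult: "mat2_adj (mat2_mult A B) = mat2_mult (mat2_adj B) (mat2_adj A)"
  by (cases A rule: prod_cases4; cases B rule: prod_cases4)
     (simp add: mat2_mult_def mat2_adj_def algebra_simps)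

lemma mult_adj_r: "mat2_det A = 1 \<Longrightarrow> mat2_mult A (mat2_adj A) = (1,0,0,1)"
  by (cases A rule: prod_cases4) (simp add: mat2_mult_def mat2_adj_def mat2_det_def algebra_simps)

lemma mult_adj_l: "mat2_det A = 1 \<Longrightarrow> mat2_mult (mat2_adj A) A = (1,0,0,1)"
  by (cases A rule: prod_cases4) (simp add: mat2_mult_def mat2_adj_def mat2_det_def algebra_simps)

lemma mult_id_l: "mat2_mult (1,0,0,1) A = A"
  by (cases A rule: prod_cases4) (simp add: mat2_mult_def)

lemma mult_id_r: "mat2_mult A (1,0,0,1) = A"
  by (cases A rule: prod_cases4) (simp add: mat2_mult_def)

lemma conj_sym: "SL2Z_conj A B \<Longrightarrow> SL2Z_conj B A"
proof -
  assume "SL2Z_conj A B"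
  then obtain g where g: "mat2_det g = 1" "B = mat2_mult (mat2_mult g A) (mat2_adj g)"
    by (auto simp: SL2Z_conj_def SL2Z_def)
  have "mat2_mult (mat2_mult (mat2_adj g) B) (mat2_adj (mat2_adj g)) =
     mat2_mult (mat2_mult (mat2_mult (mat2_adj g) g) A) (mat2_mult (mat2_adj g) g)"
    using g by (simp add: m_assoc adj_adj)
  also have "\<dots> = A" using g by (simp add: mult_adj_l mult_id_l mult_id_r)
  finally have "mat2_mult (mat2_mult (mat2_adj g) B) (mat2_adj (mat2_adj g)) = A" .
  then show ?thesis using g unfolding SL2Z_conj_def SL2Z_def
    by (intro bexI[of _ "mat2_adj g"]) (auto simp: det_adj)
qed

lemma conj_trans: "SL2Z_conj A B \<Longrightarrow> SL2Z_conj B C \<Longrightarrow> SL2Z_conj A C"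
proof -
  assume "SL2Z_conj A B" "SL2Z_conj B C"
  then obtain g h where g: "mat2_det g = 1" "B = mat2_mult (mat2_mult g A) (mat2_adj g)"
    and h: "mat2_det h = 1" "C = mat2_mult (mat2_mult h B) (mat2_adj h)"
    by (auto simp: SL2Z_conj_def SL2Z_def)
  have "C = mat2_mult (mat2_mult (mat2_mult h g) A) (mat2_adj (mat2_mult h g))"
    using g h by (simp add: m_assoc adj_mult)
  then show ?thesis using g h unfolding SL2Z_conj_def SL2Z_def
    by (intro bexI[of _ "mat2_mult h g"]) (auto simp: det_mult)
qed

lemma conj_det: "SL2Z_conj A B \<Longrightarrow> mat2_det B = mat2_det A"
  by (auto simp: SL2Z_conj_def SL2Z_def det_mult det_adj)

definition tr2 :: "mat2 \<Rightarrow> int" where "tr2 A = (case A of (a,b,c,d) \<Rightarrow> a + d)"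

lemma conj_tr: "SL2Z_conj A B \<Longrightarrow> tr2 B = tr2 A"
proof -
  assume "SL2Z_conj A B"
  then obtain g where g: "mat2_det g = 1" "B = mat2_mult (mat2_mult g A) (mat2_adj g)"
    by (auto simp: SL2Z_conj_def SL2Z_def)
  obtain p r q t where gg: "g = (p,r,q,t)" by (cases g rule: prod_cases4)
  obtain a b c d where aa: "A = (a,b,c,d)" by (cases A rule: prod_cases4)
  have "p*t - r*q = 1" using g(1) gg by (simp add: mat2_det_def)
  then have "tr2 B = (a+d)*(p*t - r*q)" using g(2) gg aa
    by (simp add: tr2_def mat2_mult_def mat2_adj_def algebra_simps)
  then show ?thesis using \<open>p*t - r*q = 1\<close> aa by (simp add: tr2_def)
qed

definition dvdm :: "int \<Rightarrow> mat2 \<Rightarrow> bool" where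
  "dvdm k A = (case A of (a,b,c,d) \<Rightarrow> k dvd a \<and> k dvd b \<and> k dvd c \<and> k dvd d)"

lemma dvdm_mult_l: "dvdm k A \<Longrightarrow> dvdm k (mat2_mult X A)"
  by (cases A rule: prod_cases4; cases X rule: prod_cases4) (simp add: dvdm_def mat2_mult_def)

lemma dvdm_mult_r: "dvdm k A \<Longrightarrow> dvdm k (mat2_mult A X)"
  by (cases A rule: prod_cases4; cases X rule: prod_cases4) (simp add: dvdm_def mat2_mult_def)

definition cont :: "mat2 \<Rightarrow> int" where
  "cont A = (case A of (a, b, c, d) \<Rightarrow> gcd (gcd a b) (gcd c d))"

lemma dvdm_cont: "dvdm (cont A) A"
  by (cases A rule: prod_cases4) (simp add: dvdm_def cont_def, meson gcd_dvd1 gcd_dvd2 dvd_trans)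

lemma dvdm_cont_dvd: "dvdm k A \<Longrightarrow> k dvd cont A"
  by (cases A rule: prod_cases4) (simp add: dvdm_def cont_def)

lemma conj_cont: assumes "SL2Z_conj A B" "cont A = 1" shows "cont B = 1"
proof -
  have "SL2Z_conj B A" using assms conj_sym by blast
  then obtain g where g: "A = mat2_mult (mat2_mult g B) (mat2_adj g)"
    by (auto simp: SL2Z_conj_def)
  have "dvdm (cont B) A" unfolding g by (intro dvdm_mult_r dvdm_mult_l dvdm_cont)
  then have "cont B dvd 1" using dvdm_cont_dvd assms(2) by fastforce
  moreover have "cont B \<ge> 0" by (cases B rule: prod_cases4) (simp add: cont_def)
  ultimately show ?thesis by simp
qed

lemma prim_cont: "A \<in> primitive_mats N \<longleftrightarrow> mat2_det A = N \<and> cont A = 1"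
  by (cases A rule: prod_cases4) (simp add: primitive_mats_def cont_def)


lemma conj_eig:
  fixes a b c d p q l :: int
  assumes cop: "coprime p q" and e1: "a*p + b*q = l*p" and e2: "c*p + d*q = l*q"
  shows "\<exists>y. SL2Z_conj (a,b,c,d) (l, y, 0, a + d - l)"
proof -
  obtain u v where uv: "u*p + v*q = 1" using bezout_int[of p q] cop by auto
  define s r where "s = u" and "r = -v"
  have det: "p*s - r*q = 1" using uv by (simp add: s_def r_def algebra_simps)
  define g where "g = ((s, -r, -q, p) :: mat2)"
  have gd: "mat2_det g = 1" using det by (simp add: g_def mat2_det_def algebra_simps)
  define B where "B = mat2_mult (mat2_mult g (a,b,c,d)) (mat2_adj g)"
  obtain B1 B2 B3 B4 where BB: "B = (B1,B2,B3,B4)" by (cases B rule: prod_cases4)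
  have b1: "B1 = s*(a*p+b*q) - r*(c*p+d*q)" and b3: "B3 = -q*(a*p+b*q) + p*(c*p+d*q)"
    and b4: "B1 + B4 = (a+d)*(p*s-r*q)"
    using BB by (auto simp: B_def g_def mat2_mult_def mat2_adj_def algebra_simps)
  have "B1 = l" using b1 e1 e2 det by (simp add: algebra_simps)
  moreover have "B3 = 0" using b3 e1 e2 by (simp add: algebra_simps)
  moreover have "B4 = a + d - l" using b4 det \<open>B1 = l\<close> by simp
  ultimately have "B = (l, B2, 0, a + d - l)" using BB by simp
  then show ?thesis using gd unfolding SL2Z_conj_def SL2Z_def B_def
    by (intro exI[of _ B2] bexI[of _ g]) auto
qed

lemma not_hyp_parab:
  fixes a b c d :: int
  assumes "(a-d)^2 + 4*b*c = 0"
  shows "\<not> hyperbolic (a,b,c,d)"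
proof
  assume h: "hyperbolic (a,b,c,d)"
  then have card: "card (fixed_points (a,b,c,d)) = 2" by (simp add: hyperbolic_def)
  show False
  proof (cases "c = 0")
    case True
    then have "a = d" using assms by simp
    show False
    proof (cases "b = 0")
      case True
      have "fixed_points (a,b,c,d) = UNIV"
        using \<open>c = 0\<close> \<open>a = d\<close> True by (auto simp: fixed_points_def)
      moreover have "infinite (UNIV :: complex option set)"
        by (metis finite_imageI infinite_UNIV_char_0 inj_Some finite_subset subset_UNIV
              finite_imageD)
      ultimately show False using card by simp
    next
      case False
      have "fixed_points (a,b,c,d) = {None}"
        using \<open>c = 0\<close> \<open>a = d\<close> False by (auto simp: fixed_points_def algebra_simps)
      then show False using card by simp
    qed
  next
    case False
    define z0 :: complex where "z0 = of_int (a - d) / (2 * of_int c)"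
    have "fixed_points (a,b,c,d) \<subseteq> {Some z0}"
    proof
      fix p assume "p \<in> fixed_points (a,b,c,d)"
      then obtain z where p: "p = Some z" and eq: "of_int a * z + of_int b = z * (of_int c * z + of_int d)"
        using False by (auto simp: fixed_points_def)
      have ai: "(of_int ((a-d)^2 + 4*b*c) :: complex) = 0" using assms by simp
      have "(2 * of_int c * z + of_int (d - a))^2 = (of_int ((a-d)^2 + 4*b*c) :: complex)
               + 4 * of_int c * (z * (of_int c * z + of_int d) - (of_int a * z + of_int b))"
        by (simp add: power2_eq_square algebra_simps)
      then have "(2 * of_int c * z + of_int (d - a))^2 = 0" using ai eq by simp
      then have "2 * of_int c * z + of_int (d - a) = 0" by simp
      then have "z = z0" using False unfolding z0_def by (simp add: field_simps)
      then show "p \<in> {Some z0}" using p by simp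
    qed
    then have "card (fixed_points (a,b,c,d)) \<le> 1"
      by (metis card.empty card.insert card_mono empty_iff finite.intros(1) finite_insert One_nat_def)
    then show False using card by simp
  qed
qed


lemma int_eig_from_eq:
  fixes a b c d P Q :: int
  assumes cop: "coprime P Q" and Q: "Q > 0"
    and eq: "a*P*Q + b*Q*Q = P*(c*P + d*Q)"
  shows "\<exists>l. a*P + b*Q = l*P \<and> c*P + d*Q = l*Q"
proof -
  have "Q dvd P*(c*P + d*Q)" using eq[symmetric] by (metis dvd_triv_right distrib_left mult.assoc mult.commute)
  then have "Q dvd c*P + d*Q" using cop by (metis coprime_commute coprime_dvd_mult_right_iff)
  then obtain l where l: "c*P + d*Q = l*Q" by (auto simp: dvd_def mult.commute)
  have "Q*(a*P + b*Q) = P*(c*P + d*Q)" using eq by (simp add: algebra_simps)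
  also have "\<dots> = Q*(l*P)" using l by simp
  finally have "Q*(a*P + b*Q) = Q*(l*P)" .
  then have "a*P + b*Q = l*P" using Q by simp
  then show ?thesis using l by blast
qed

lemma exists_eig:
  fixes a b c d :: int
  assumes cf: "cusp_fixed (a,b,c,d)" and hy: "hyperbolic (a,b,c,d)"
  shows "\<exists>p q l. coprime p q \<and> a*p + b*q = l*p \<and> c*p + d*q = l*q"
proof (cases "c = 0")
  case True
  then show ?thesis by (intro exI[of _ 1] exI[of _ 0] exI[of _ a]) auto
next
  case False
  have "card (fixed_points (a,b,c,d)) = 2" using hy by (simp add: hyperbolic_def)
  then have "fixed_points (a,b,c,d) \<noteq> {}" by auto
  then obtain pt where pt: "pt \<in> fixed_points (a,b,c,d)" by auto
  then obtain z where ptz: "pt = Some z" and eq: "of_int a * z + of_int b = z * (of_int c * z + of_int d)"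
    using False by (auto simp: fixed_points_def)
  have "z \<in> \<rat>" using cf pt ptz by (auto simp: cusp_fixed_def in_P1Q_def)
  then obtain r where zr: "z = of_rat r" by (auto elim: Rats_cases)
  obtain P Q where PQ: "quotient_of r = (P, Q)" by (cases "quotient_of r")
  have Qp: "Q > 0" using PQ quotient_of_denom_pos by blast
  have cop: "coprime P Q" using PQ quotient_of_coprime by blast
  have "r = of_int P / of_int Q" using PQ quotient_of_div by blast
  then have zPQ: "z = of_int P / of_int Q" using zr by (simp add: of_rat_divide)
  have Qc: "(of_int Q :: complex) \<noteq> 0" using Qp by simp
  have "of_int a * (of_int P / of_int Q) + of_int b =
        (of_int P / of_int Q) * (of_int c * (of_int P / of_int Q) + of_int d :: complex)"
    using eq zPQ by simp
  then have "of_int (Q*(a*P*Q + b*Q*Q)) = (of_int (Q*(P*(c*P + d*Q))) :: complex)"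
    using Qc by (simp add: field_simps)
  then have "Q*(a*P*Q + b*Q*Q) = Q*(P*(c*P + d*Q))" by (simp only: of_int_eq_iff)
  then have "a*P*Q + b*Q*Q = P*(c*P + d*Q)" using Qp by simp
  then obtain l where "a*P + b*Q = l*P \<and> c*P + d*Q = l*Q" using int_eig_from_eq[OF cop Qp] by blast
  then show ?thesis using cop by blast
qed


lemma core:
  fixes a d x :: int
  assumes a0: "0 < a" and ad: "a < d" and g1: "gcd (gcd a x) d = 1"
  shows "\<exists>b m w. 1 \<le> b \<and> b \<le> gcd a d \<and> coprime b (gcd a d) \<and>
     1 \<le> m \<and> m \<le> (d - a) div gcd a d \<and> x + w*(d-a) = b + m*a"
proof -
  define h where "h = gcd a d"
  have h0: "h > 0" using a0 by (simp add: h_def)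
  have cx: "gcd x h = 1" using g1 unfolding h_def by (simp add: ac_simps)
  define a' d' where "a' = a div h" and "d' = d div h"
  have aa: "a = a'*h" and dd: "d = d'*h" by (simp_all add: a'_def d'_def h_def)
  have cad: "coprime a' d'" unfolding a'_def d'_def h_def using a0
    by (intro div_gcd_coprime) auto
  define N where "N = d' - a'"
  have dmaN: "d - a = N*h" by (simp add: N_def aa dd algebra_simps)
  have NN: "(d - a) div h = N" using h0 dmaN by simp
  have N0: "N > 0" using dmaN h0 ad by (metis diff_gt_0_iff_gt zero_less_mult_pos2)
  have cN: "coprime a' N" unfolding N_def using cad gcd_diff1[of d' a']
    by (simp add: coprime_iff_gcd_eq_1 gcd.commute)
  define b where "b = (if x mod h = 0 then h else x mod h)"
  have xm: "0 \<le> x mod h" "x mod h < h" using h0 by simp_all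
  have b1: "1 \<le> b \<and> b \<le> h"
  proof (cases "x mod h = 0")
    case True then show ?thesis using h0 by (simp add: b_def)
  next
    case False then have "b = x mod h" by (simp add: b_def)
    then show ?thesis using xm False by linarith
  qed
  have bdv: "h dvd x - b"
    unfolding b_def by (auto simp: mod_eq_0_iff_dvd minus_mod_eq_mult_div [symmetric])
  have bc: "coprime b h"
  proof (cases "x mod h = 0")
    case True
    then have "h dvd x" by auto
    then have "h dvd gcd x h" by simp
    then have "h = 1" using cx h0 by simp
    then show ?thesis using True by (simp add: b_def)
  next
    case False
    then show ?thesis using cx gcd_red_int[of x h] by (simp add: b_def coprime_iff_gcd_eq_1 gcd.commute)
  qed
  obtain t where t: "x - b = h*t" using bdv by (auto simp: dvd_def)
  obtain u v where uv: "u*a' + v*N = 1" using bezout_int[of a' N] cN by auto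
  define m0 where "m0 = (u*t) mod N"
  define m where "m = (if m0 = 0 then N else m0)"
  have mm: "0 \<le> m0" "m0 < N" using N0 unfolding m0_def by simp_all
  have m1: "1 \<le> m \<and> m \<le> N"
  proof (cases "m0 = 0")
    case True then show ?thesis using N0 by (simp add: m_def)
  next
    case False then have "m = m0" by (simp add: m_def)
    then show ?thesis using mm False by linarith
  qed
  have "N dvd m - u*t"
    unfolding m_def m0_def by (auto simp: mod_eq_0_iff_dvd mod_eq_dvd_iff[symmetric])
  then obtain k where k: "m - u*t = N*k" by (auto simp: dvd_def)
  have "m*a' - t = (m - u*t)*a' - t*(1 - u*a')" by (simp add: algebra_simps)
  also have "\<dots> = N*(k*a' - t*v)"
  proof -
    have "1 - u*a' = v*N" using uv by linarith
    then have "t*(1 - u*a') = t*(v*N)" by simp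
    then show ?thesis using k by (simp add: algebra_simps)
  qed
  finally have ma: "m*a' - t = N*(k*a' - t*v)" .
  define w where "w = k*a' - t*v"
  have "b + m*a - x = h*(m*a' - t)" using t aa by (simp add: algebra_simps)
  also have "\<dots> = h*(N*w)" using ma by (simp add: w_def)
  also have "\<dots> = w*(d-a)" using dmaN by (simp add: algebra_simps)
  finally have "x + w*(d-a) = b + m*a" by simp
  then show ?thesis using b1 bc m1 NN unfolding h_def
    by (intro exI[of _ b] exI[of _ m] exI[of _ w]) (auto simp: coprime_commute)
qed


lemma upper_pos:
  fixes a d x s :: int
  assumes s: "s \<in> {1, -1}" and a0: "0 < a" and ad: "a < d" and prod: "a*d = (int n)^2"
    and g1: "gcd (gcd a x) d = 1"
  shows "\<exists>B\<in>reps n. SL2Z_conj (s*a, s*x, 0, s*d) B"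
proof -
  obtain b m w where bm: "1 \<le> b" "b \<le> gcd a d" "coprime b (gcd a d)"
     "1 \<le> m" "m \<le> (d - a) div gcd a d" and w: "x + w*(d-a) = b + m*a"
    using core[OF a0 ad g1] by blast
  define T where "T = ((1, w, 0, 1) :: mat2)"
  have Td: "mat2_det T = 1" by (simp add: T_def mat2_det_def)
  have "mat2_mult (mat2_mult T (s*a, s*x, 0, s*d)) (mat2_adj T) =
        (s*a, s*(x + w*(d-a)), 0, s*d)"
    by (simp add: T_def mat2_mult_def mat2_adj_def algebra_simps)
  also have "\<dots> = mat2_scale s (a, b + m*a, 0, d)" using w by (simp add: mat2_scale_def)
  finally have eq: "mat2_scale s (a, b + m*a, 0, d) = mat2_mult (mat2_mult T (s*a, s*x, 0, s*d)) (mat2_adj T)" ..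
  have "mat2_scale s (a, b + m*a, 0, d) \<in> reps n"
    unfolding reps_def using s a0 ad prod bm by blast
  moreover have "SL2Z_conj (s*a, s*x, 0, s*d) (mat2_scale s (a, b + m*a, 0, d))"
    unfolding SL2Z_conj_def SL2Z_def using Td eq by blast
  ultimately show ?thesis by blast
qed

lemma upper_normal:
  fixes al y be :: int
  assumes n: "n > 0" and prod: "al*be = (int n)^2" and lt: "\<bar>al\<bar> < \<bar>be\<bar>"
    and c: "cont (al, y, 0, be) = 1"
  shows "\<exists>B\<in>reps n. SL2Z_conj (al, y, 0, be) B"
proof -
  have g: "gcd (gcd al y) be = 1" using c by (simp add: cont_def)
  have pos: "al*be > 0" using prod n by simp
  show ?thesis
  proof (cases "al > 0")
    case True
    then have "be > 0" using pos by (simp add: zero_less_mult_iff)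
    then show ?thesis using upper_pos[of 1 al be n y] True lt prod g by simp
  next
    case False
    then have "al < 0" "be < 0" using pos by (auto simp: zero_less_mult_iff)
    have "gcd (gcd (-al) (-y)) (-be) = 1" using g by simp
    then have "\<exists>B\<in>reps n. SL2Z_conj ((-1)*(-al), (-1)*(-y), 0, (-1)*(-be)) B"
      using upper_pos[of "-1" "-al" "-be" n "-y"] \<open>al < 0\<close> \<open>be < 0\<close> lt prod by simp
    then show ?thesis by simp
  qed
qed

lemma swap_conj:
  fixes al y be :: int
  assumes "al \<noteq> be"
  shows "\<exists>y'. SL2Z_conj (al, y, 0, be) (be, y', 0, al)"
proof -
  define g where "g = gcd y (be - al)"
  have g0: "g \<noteq> 0" using assms by (simp add: g_def)
  define p q where "p = y div g" and "q = (be - al) div g"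
  have cop: "coprime p q" unfolding p_def q_def g_def using g0 g_def by (intro div_gcd_coprime) auto
  have py: "y = p*g" and qb: "be - al = q*g" by (simp_all add: p_def q_def g_def)
  have e1: "al*p + y*q = be*p"
  proof -
    have "g*(al*p + y*q) = g*(be*p)" using py qb by (simp add: algebra_simps)
    then show ?thesis using g0 by simp
  qed
  have e2: "0*p + be*q = be*q" by simp
  show ?thesis using conj_eig[OF cop e1 e2] by simp
qed


lemma existence:
  assumes n: "n > 0" and A: "A \<in> primitive_mats ((int n)^2)" and hy: "hyperbolic A" and cf: "cusp_fixed A"
  shows "\<exists>B\<in>reps n. SL2Z_conj A B"
proof -
  obtain a b c d where AA: "A = (a,b,c,d)" by (cases A rule: prod_cases4)
  obtain p q l where cop: "coprime p q" and e1: "a*p + b*q = l*p" and e2: "c*p + d*q = l*q"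
    using exists_eig[of a b c d] hy cf AA by blast
  obtain y where c1: "SL2Z_conj A (l, y, 0, a + d - l)" using conj_eig[OF cop e1 e2] AA by blast
  define mu where "mu = a + d - l"
  have detA: "mat2_det A = (int n)^2" and contA: "cont A = 1" using A prim_cont by auto
  have lm: "l*mu = (int n)^2" using conj_det[OF c1] detA by (simp add: mat2_det_def mu_def)
  have cB1: "cont (l, y, 0, mu) = 1" using conj_cont[OF c1 contA] by (simp add: mu_def)
  have c1': "SL2Z_conj A (l, y, 0, mu)" using c1 by (simp add: mu_def)
  have ne: "l \<noteq> mu"
  proof
    assume "l = mu"
    have "a*d - b*c = l*mu" using detA lm AA by (simp add: mat2_det_def)
    then have "(a-d)^2 + 4*b*c = (a+d)^2 - 4*(l*mu)" by (simp add: power2_eq_square algebra_simps)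
    also have "\<dots> = 0"
    proof -
      have "a + d = 2*l" using \<open>l = mu\<close> by (simp add: mu_def)
      then show ?thesis using \<open>l = mu\<close> by (simp add: power2_eq_square algebra_simps)
    qed
    finally show False using not_hyp_parab[of a d b c] hy AA by simp
  qed
  have pos: "l*mu > 0" using lm n by simp
  have absne: "\<bar>l\<bar> \<noteq> \<bar>mu\<bar>"
  proof
    assume "\<bar>l\<bar> = \<bar>mu\<bar>"
    then have "l = mu \<or> l = - mu" by (auto simp: abs_if split: if_splits)
    then show False using ne pos by (auto simp: mult_less_0_iff)
  qed
  show ?thesis
  proof (cases "\<bar>l\<bar> < \<bar>mu\<bar>")
    case True
    then obtain B where "B \<in> reps n" "SL2Z_conj (l, y, 0, mu) B" using upper_normal[OF n lm True cB1] by blast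
    then show ?thesis using c1' conj_trans by blast
  next
    case False
    then have lt: "\<bar>mu\<bar> < \<bar>l\<bar>" using absne by simp
    obtain y' where c2: "SL2Z_conj (l, y, 0, mu) (mu, y', 0, l)" using swap_conj[OF ne] by blast
    have cB2: "cont (mu, y', 0, l) = 1" using conj_cont[OF c2 cB1] .
    have ml: "mu*l = (int n)^2" using lm by (simp add: mult.commute)
    obtain B where "B \<in> reps n" "SL2Z_conj (mu, y', 0, l) B" using upper_normal[OF n ml lt cB2] by blast
    then show ?thesis using c1' c2 conj_trans by blast
  qed
qed


lemma fixed_upper:
  fixes a x d :: int
  assumes "a \<noteq> d"
  shows "fixed_points (a, x, 0, d) = {Some (of_int x / of_int (d - a)), None}"
proof -
  have dz: "(of_int (d - a) :: complex) \<noteq> 0" using assms by simp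
  have "\<And>z::complex. (of_int a * z + of_int x = z * (0 * z + of_int d)) \<longleftrightarrow> z = of_int x / of_int (d - a)"
  proof -
    fix z :: complex
    have "(of_int a * z + of_int x = z * (0 * z + of_int d)) \<longleftrightarrow> z * of_int (d - a) = of_int x"
      by (auto simp: algebra_simps)
    also have "\<dots> \<longleftrightarrow> z = of_int x / of_int (d - a)" using dz by (auto simp: field_simps)
    finally show "(of_int a * z + of_int x = z * (0 * z + of_int d)) \<longleftrightarrow> z = of_int x / of_int (d - a)" .
  qed
  then show ?thesis by (auto simp: fixed_points_def)
qed

lemma reps_in:
  assumes B: "B \<in> reps n"
  shows "B \<in> primitive_mats ((int n)^2) \<and> hyperbolic B \<and> cusp_fixed B"
proof -
  obtain s a d b m where Bd: "B = mat2_scale s (a, b + m*a, 0, d)" and s: "s \<in> {1, -1}"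
    and a0: "0 < a" and ad: "a < d" and prod: "a * d = (int n)^2"
    and bm: "1 \<le> b" "b \<le> gcd a d" "coprime b (gcd a d)" "1 \<le> m" "m \<le> (d - a) div gcd a d"
    using B unfolding reps_def by blast
  define x where "x = b + m*a"
  have BB: "B = (s*a, s*x, 0, s*d)" using Bd by (simp add: mat2_scale_def x_def)
  have ss: "s*s = 1" using s by auto
  have det: "mat2_det B = (int n)^2" using BB ss prod
    by (simp add: mat2_det_def) (metis mult.assoc mult.left_commute mult_1)
  have g1: "gcd (gcd a x) d = 1"
  proof -
    define k where "k = gcd (gcd a x) d"
    have ka: "k dvd a" and kx: "k dvd x" and kd: "k dvd d" unfolding k_def
      by (meson dvd_trans gcd_dvd1 gcd_dvd2)+
    have kh: "k dvd gcd a d" using ka kd by simp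
    have "k dvd b" using kx ka unfolding x_def by (metis add_diff_cancel_right' dvd_diff dvd_mult)
    then have "k dvd gcd b (gcd a d)" using kh by simp
    then have "k dvd 1" using bm(3) by simp
    moreover have "k \<ge> 0" by (simp add: k_def)
    ultimately show ?thesis by (simp add: k_def)
  qed
  have "cont B = 1"
    using s g1 BB a0 ad by (auto simp: cont_def)
  then have prim: "B \<in> primitive_mats ((int n)^2)" using det prim_cont by simp
  have ne: "s*a \<noteq> s*d" using s ad by auto
  have fp: "fixed_points B = {Some (of_int (s*x) / of_int (s*d - s*a)), None}"
    using fixed_upper[OF ne] BB by simp
  have "hyperbolic B" unfolding hyperbolic_def fp
    by (auto simp: in_P1R_def)
  moreover have "cusp_fixed B" unfolding cusp_fixed_def fp
    by (auto simp: in_P1Q_def)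
  ultimately show ?thesis using prim by blast
qed


lemma dvd_small_zero:
  fixes k h :: int
  assumes "h dvd k" "\<bar>k\<bar> < h"
  shows "k = 0"
proof (rule ccontr)
  assume "k \<noteq> 0"
  then have "\<bar>h\<bar> \<le> \<bar>k\<bar>" using assms(1) dvd_imp_le_int by blast
  then show False using assms(2) by linarith
qed

lemma uniq:
  assumes B1: "B1 \<in> reps n" and B2: "B2 \<in> reps n" and cj: "SL2Z_conj B1 B2"
  shows "B1 = B2"
proof -
  obtain s1 a1 d1 b1 m1 where Bd1: "B1 = mat2_scale s1 (a1, b1 + m1*a1, 0, d1)" and s1: "s1 \<in> {1, -1}"
    and a1: "0 < a1" "a1 < d1" "a1 * d1 = (int n)^2"
    and bm1: "1 \<le> b1" "b1 \<le> gcd a1 d1" "1 \<le> m1" "m1 \<le> (d1 - a1) div gcd a1 d1"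
    using B1 unfolding reps_def by blast
  obtain s2 a2 d2 b2 m2 where Bd2: "B2 = mat2_scale s2 (a2, b2 + m2*a2, 0, d2)" and s2: "s2 \<in> {1, -1}"
    and a2: "0 < a2" "a2 < d2" "a2 * d2 = (int n)^2"
    and bm2: "1 \<le> b2" "b2 \<le> gcd a2 d2" "1 \<le> m2" "m2 \<le> (d2 - a2) div gcd a2 d2"
    using B2 unfolding reps_def by blast
  define x1 x2 where "x1 = b1 + m1*a1" and "x2 = b2 + m2*a2"
  have BB1: "B1 = (s1*a1, s1*x1, 0, s1*d1)" using Bd1 by (simp add: mat2_scale_def x1_def)
  have BB2: "B2 = (s2*a2, s2*x2, 0, s2*d2)" using Bd2 by (simp add: mat2_scale_def x2_def)
  have tr: "s1*(a1+d1) = s2*(a2+d2)" using conj_tr[OF cj] BB1 BB2 by (simp add: tr2_def algebra_simps)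
  have seq: "s1 = s2"
  proof (rule ccontr)
    assume "s1 \<noteq> s2"
    then have "s2 = - s1" using s1 s2 by auto
    then have "s1*(a1+d1) = -(s1*(a2+d2))" using tr by simp
    then have "s1*(a1+d1+a2+d2) = 0" by (simp add: algebra_simps)
    then show False using s1 a1 a2 by auto
  qed
  have sum: "a1 + d1 = a2 + d2" using tr seq s1 by auto
  have "(d1 - a1)^2 = (d2 - a2)^2"
  proof -
    have "(d1 - a1)^2 = (a1+d1)^2 - 4*(a1*d1)" by (simp add: power2_eq_square algebra_simps)
    also have "\<dots> = (a2+d2)^2 - 4*(a2*d2)" using sum a1 a2 by simp
    also have "\<dots> = (d2 - a2)^2" by (simp add: power2_eq_square algebra_simps)
    finally show ?thesis .
  qed
  then have "d1 - a1 = d2 - a2" using a1 a2 by (simp add: power2_eq_iff_nonneg)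
  then have aeq: "a1 = a2" and deq: "d1 = d2" using sum by linarith+
  define a d s where "a = a1" and "d = d1" and "s = s1"
  have sa: "s*s = 1" using s1 by (auto simp: s_def)
  have BB1': "B1 = (s*a, s*x1, 0, s*d)" and BB2': "B2 = (s*a, s*x2, 0, s*d)"
    using BB1 BB2 aeq deq seq by (simp_all add: a_def d_def s_def)
  obtain g where gd: "mat2_det g = 1" and g: "B2 = mat2_mult (mat2_mult g B1) (mat2_adj g)"
    using cj by (auto simp: SL2Z_conj_def SL2Z_def)
  have "mat2_mult B2 g = mat2_mult (mat2_mult g B1) (mat2_mult (mat2_adj g) g)"
    using g by (simp add: m_assoc)
  also have "\<dots> = mat2_mult g B1" using gd by (simp add: mult_adj_l mult_id_r)
  finally have comm: "mat2_mult B2 g = mat2_mult g B1" .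
  obtain p r q t where gg: "g = (p, r, q, t)" by (cases g rule: prod_cases4)
  have E3: "s*d*q = q*(s*a)" and E2: "s*a*r + s*x2*t = p*(s*x1) + r*(s*d)"
    using comm BB1' BB2' gg by (auto simp: mat2_mult_def)
  have "s \<noteq> 0" using sa by auto
  have adn: "a \<noteq> d" using a1 by (simp add: a_def d_def)
  have "q*(d - a)*s = 0" using E3 by (simp add: algebra_simps)
  then have q0: "q = 0" using \<open>s \<noteq> 0\<close> adn by simp
  then have pt: "p*t = 1" using gd gg by (simp add: mat2_det_def)
  then have "p = t" "p*p = 1" using zmult_eq_1_iff[of p t] by auto
  have "s*(a*r + x2*t) = s*(p*x1 + r*d)" using E2 by (simp add: algebra_simps)
  then have "a*r + x2*t = p*x1 + r*d" using \<open>s \<noteq> 0\<close> by simp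
  then have "p*(a*r + x2*t) = p*(p*x1 + r*d)" by simp
  moreover have "p*(a*r + x2*t) = p*r*a + x2*(p*t)" by (simp add: algebra_simps)
  moreover have "p*(p*x1 + r*d) = (p*p)*x1 + p*r*d" by (simp add: algebra_simps)
  ultimately have "p*r*a + x2 = x1 + p*r*d" using pt \<open>p*p = 1\<close> by simp
  then have "x1 - x2 = (p*r)*(a - d)" by (simp add: algebra_simps)
  then have "x1 - x2 = (d - a) * (-(p*r))" by (simp add: algebra_simps)
  then have dvx: "(d - a) dvd x1 - x2" unfolding dvd_def by blast
  define h where "h = gcd a d"
  have h0: "h > 0" using a1 by (simp add: h_def a_def)
  have ha: "h dvd a" and hd: "h dvd d - a" by (simp_all add: h_def)
  have hx: "h dvd x1 - x2" using dvd_trans[OF hd dvx] .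
  have hm: "h dvd (m1 - m2)*a" using ha by simp
  have "h dvd (x1 - x2) - (m1 - m2)*a" using hx hm by (rule dvd_diff)
  moreover have "(x1 - x2) - (m1 - m2)*a = b1 - b2" by (simp add: x1_def x2_def aeq a_def algebra_simps)
  ultimately have "h dvd b1 - b2" by simp
  moreover have "\<bar>b1 - b2\<bar> < h" using bm1 bm2 aeq deq by (simp add: h_def a_def d_def)
  ultimately have beq: "b1 = b2" using dvd_small_zero by fastforce
  define a' N where "a' = a div h" and "N = (d - a) div h"
  have aa: "a = a'*h" and NN: "d - a = N*h" using ha hd by (simp_all add: a'_def N_def)
  have cad: "coprime a' (d div h)" unfolding a'_def h_def using a1 a_def
    by (intro div_gcd_coprime) auto
  have "h dvd d" by (simp add: h_def)
  then have "N = d div h - a'" unfolding N_def a'_def using ha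
    by (simp add: div_diff)
  then have cN: "coprime a' N" using cad gcd_diff1[of "d div h" a']
    by (simp add: coprime_iff_gcd_eq_1 gcd.commute)
  have "x1 - x2 = (m1 - m2)*a" by (simp add: x1_def x2_def aeq a_def beq algebra_simps)
  also have "\<dots> = ((m1 - m2)*a')*h" using aa by simp
  finally have "(d - a) dvd ((m1 - m2)*a')*h" using dvx by simp
  then have "N*h dvd ((m1 - m2)*a')*h" using NN by simp
  then have "N dvd (m1 - m2)*a'" using h0 by simp
  then have "N dvd m1 - m2" using cN by (metis coprime_commute coprime_dvd_mult_left_iff)
  moreover have "\<bar>m1 - m2\<bar> < N" using bm1 bm2 aeq deq
    by (simp add: N_def h_def a_def d_def)
  ultimately have meq: "m1 = m2" using dvd_small_zero by fastforce
  show ?thesis using Bd1 Bd2 aeq deq seq beq meq by simp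
qed

theorem lemma9:
  fixes n :: nat
  assumes "n > 0"
  shows "complete_reps (reps n)
           {A \<in> primitive_mats ((int n)^2). hyperbolic A \<and> cusp_fixed A}"
  unfolding complete_reps_def
proof (intro conjI ballI impI)
  show "reps n \<subseteq> {A \<in> primitive_mats ((int n)^2). hyperbolic A \<and> cusp_fixed A}"
    using reps_in by blast
next
  fix A assume "A \<in> {A \<in> primitive_mats ((int n)^2). hyperbolic A \<and> cusp_fixed A}"
  then show "\<exists>B\<in>reps n. SL2Z_conj A B" using existence[OF assms] by blast
next
  fix B1 B2 assume "B1 \<in> reps n" "B2 \<in> reps n" "SL2Z_conj B1 B2"
  then show "B1 = B2" using uniq by blast
qed

end
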